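(* Let $G=K_n$ be the complete graph of order $n\geq 3$, let $g:V(G_1)\to V(G_2)$ be a function with image $I=\{v_1,\dots,v_s\}$ ($s=|I|$), let $n_i=|\{u\in V(G_1): g(u)=v_i\}|$ for $1\le i\le s$, and let $m=|\{i: 1\le i\le s,\ n_i=1\}|$. If $2\leq m\leq s$, then $Dist(F_G)\geq \psi(m)$.
   Context: $Dist(H)$ is the least $t$ such that $H$ has a labeling $V(H)\to\{1,\dots,t\}$ preserved by no non-identity automorphism of $H$. Functigraph: for disjoint copies $G_1,G_2$ of $G$ and a function $g:V(G_1)\to V(G_2)$, $F_G$ has vertex set $V(G_1)\cup V(G_2)$ and edge set $E(G_1)\cup E(G_2)\cup\{uv: u\in V(G_1),\ g(u)=v\}$. The function $\psi:\mathbb{N}\setminus\{1\}\to\mathbb{N}\setminus\{1\}$ is defined by $\psi(m)=k$, where $k$ is the least number (with $k\ge2$) such that $m\leq 2\binom{k}{2}+k$. *)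

theory Defs
  imports Main
begin

definition is_aut :: "'v set \<Rightarrow> ('v \<Rightarrow> 'v \<Rightarrow> bool) \<Rightarrow> ('v \<Rightarrow> 'v) \<Rightarrow> bool" where
  "is_aut V E f \<longleftrightarrow> bij_betw f V V \<and> (\<forall>u\<in>V. \<forall>v\<in>V. E (f u) (f v) \<longleftrightarrow> E u v)"

definition dist_num :: "'v set \<Rightarrow> ('v \<Rightarrow> 'v \<Rightarrow> bool) \<Rightarrow> nat" where
  "dist_num V E = (LEAST t. \<exists>c :: 'v \<Rightarrow> nat. (\<forall>v\<in>V. c v \<in> {1..t}) \<and>
      (\<forall>f. is_aut V E f \<and> (\<forall>v\<in>V. c (f v) = c v) \<longrightarrow> (\<forall>v\<in>V. f v = v)))"

definition complete_adj :: "'a \<Rightarrow> 'a \<Rightarrow> bool" where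
  "complete_adj u v \<longleftrightarrow> u \<noteq> v"

text \<open>Functigraph: G1 = Inl copy, G2 = Inr copy, g maps V(G1) to V(G2).\<close>
definition fg_vertices :: "'a set \<Rightarrow> ('a + 'a) set" where
  "fg_vertices V = Inl ` V \<union> Inr ` V"

fun fg_adj :: "('a \<Rightarrow> 'a \<Rightarrow> bool) \<Rightarrow> ('a \<Rightarrow> 'a) \<Rightarrow> 'a + 'a \<Rightarrow> 'a + 'a \<Rightarrow> bool" where
  "fg_adj E g (Inl u) (Inl v) = E u v"
| "fg_adj E g (Inr u) (Inr v) = E u v"
| "fg_adj E g (Inl u) (Inr v) = (g u = v)"
| "fg_adj E g (Inr v) (Inl u) = (g u = v)"

definition psi :: "nat \<Rightarrow> nat" where
  "psi m = (LEAST k. 2 \<le> k \<and> m \<le> 2 * (k choose 2) + k)"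

end

theory Submission
  imports Defs
begin

definition sw :: "'b \<Rightarrow> 'b \<Rightarrow> 'b \<Rightarrow> 'b" where
  "sw a b x = (if x = a then b else if x = b then a else x)"

lemma sw_inj: "(sw a b x = sw a b y) = (x = y)"
  unfolding sw_def by auto

lemma sw_in: "a \<in> V \<Longrightarrow> b \<in> V \<Longrightarrow> x \<in> V \<Longrightarrow> sw a b x \<in> V"
  unfolding sw_def by auto

lemma exists_dist:
  assumes "finite W"
  shows "\<exists>t. \<exists>c :: 'v \<Rightarrow> nat. (\<forall>v\<in>W. c v \<in> {1..t}) \<and>
      (\<forall>f. is_aut W E f \<and> (\<forall>v\<in>W. c (f v) = c v) \<longrightarrow> (\<forall>v\<in>W. f v = v))"
proof -
  obtain h where h: "bij_betw h W {0..<card W}"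
    using ex_bij_betw_finite_nat[OF assms] by blast
  show ?thesis
  proof (intro exI conjI allI impI)
    show "\<forall>v\<in>W. h v + 1 \<in> {1..card W}" using h bij_betwE by fastforce
  next
    fix f assume f: "is_aut W E f \<and> (\<forall>v\<in>W. h (f v) + 1 = h v + 1)"
    show "\<forall>v\<in>W. f v = v"
    proof
      fix v assume v: "v \<in> W"
      have "f v \<in> W" using f v unfolding is_aut_def using bij_betwE by blast
      moreover have "h (f v) = h v" using f v by auto
      ultimately show "f v = v" using h v unfolding bij_betw_def inj_on_def by blast
    qed
  qed
qed

lemma ch: "2 * (n choose 2) + n = n * (n::nat)"
proof (induction n)
  case (Suc n)
  have "Suc n choose 2 = (n choose 2) + n"
    using binomial_Suc_Suc[of n 1] by (simp add: numeral_2_eq_2)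
  thus ?case using Suc by simp
qed simp

theorem proposition3p2:
  fixes V :: "'a set" and g :: "'a \<Rightarrow> 'a"
  assumes "finite V" and "card V \<ge> 3"
    and "\<forall>u\<in>V. g u \<in> V"
    and "2 \<le> card {v \<in> g ` V. card {u \<in> V. g u = v} = 1}"
    and "card {v \<in> g ` V. card {u \<in> V. g u = v} = 1} \<le> card (g ` V)"
  shows "dist_num (fg_vertices V) (fg_adj complete_adj g)
           \<ge> psi (card {v \<in> g ` V. card {u \<in> V. g u = v} = 1})"
proof -
  define T where "T = {v \<in> g ` V. card {u \<in> V. g u = v} = 1}"
  define W where "W = fg_vertices V"
  define E where "E = fg_adj complete_adj g"
  define P where "P = (\<lambda>t. \<exists>c :: 'a + 'a \<Rightarrow> nat. (\<forall>v\<in>W. c v \<in> {1..t}) \<and>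
      (\<forall>f. is_aut W E f \<and> (\<forall>v\<in>W. c (f v) = c v) \<longrightarrow> (\<forall>v\<in>W. f v = v)))"
  have finW: "finite W" unfolding W_def fg_vertices_def using assms(1) by auto
  have dn: "dist_num W E = (LEAST t. P t)" unfolding dist_num_def P_def by simp
  have ex: "\<exists>t. P t" unfolding P_def by (rule exists_dist[OF finW])
  define pre where "pre v = (THE u. u \<in> V \<and> g u = v)" for v
  have pre: "pre v \<in> V \<and> g (pre v) = v \<and> (\<forall>u\<in>V. g u = v \<longrightarrow> u = pre v)" if "v \<in> T" for v
  proof -
    from that have "card {u \<in> V. g u = v} = 1" unfolding T_def by auto
    then obtain u where u: "{u \<in> V. g u = v} = {u}" by (rule card_1_singletonE)
    hence "pre v = u" unfolding pre_def by (intro the_equality) auto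
    thus ?thesis using u by auto
  qed
  have main: "card T \<le> t * t" if Pt: "P t" for t
  proof -
    obtain c where c1: "\<forall>v\<in>W. c v \<in> {1..t}"
      and c2: "\<forall>f. is_aut W E f \<and> (\<forall>v\<in>W. c (f v) = c v) \<longrightarrow> (\<forall>v\<in>W. f v = v)"
      using Pt unfolding P_def by blast
    define h where "h v = (c (Inl (pre v)), c (Inr v))" for v
    have TV: "T \<subseteq> V" unfolding T_def using assms(3) by auto
    have "inj_on h T"
    proof (rule inj_onI, rule ccontr)
      fix v v' assume v: "v \<in> T" and v': "v' \<in> T" and hv: "h v = h v'" and ne: "v \<noteq> v'"
      define u where "u = pre v"
      define u' where "u' = pre v'"
      have pu: "u \<in> V" "g u = v" "\<And>a. a \<in> V \<Longrightarrow> g a = v \<Longrightarrow> a = u"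
        using pre[OF v] unfolding u_def by auto
      have pu': "u' \<in> V" "g u' = v'" "\<And>a. a \<in> V \<Longrightarrow> g a = v' \<Longrightarrow> a = u'"
        using pre[OF v'] unfolding u'_def by auto
      have vV: "v \<in> V" "v' \<in> V" using v v' TV by auto
      have comm: "g (sw u u' a) = sw v v' (g a)" if "a \<in> V" for a
      proof -
        have "g a \<noteq> v" if "a \<noteq> u" using pu(3)[OF \<open>a \<in> V\<close>] that by blast
        moreover have "g a \<noteq> v'" if "a \<noteq> u'" using pu'(3)[OF \<open>a \<in> V\<close>] that by blast
        ultimately show ?thesis using pu(2) pu'(2) ne unfolding sw_def by auto
      qed
      define f where "f = map_sum (sw u u') (sw v v')"
      have fW: "f x \<in> W" if "x \<in> W" for x
        using that pu(1) pu'(1) vV unfolding f_def W_def fg_vertices_def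
        by (auto intro: sw_in)
      have ff: "f (f x) = x" for x
        unfolding f_def by (cases x) (auto simp: sw_def)
      have bij: "bij_betw f W W"
        by (rule bij_betw_byWitness[where f'=f]) (auto intro: fW simp: ff)
      have edge: "E (f x) (f y) = E x y" if "x \<in> W" "y \<in> W" for x y
        using that unfolding E_def f_def W_def fg_vertices_def
        by (auto simp: complete_adj_def sw_inj comm)
      have aut: "is_aut W E f" unfolding is_aut_def using bij edge by auto
      have cu: "c (Inl u) = c (Inl u')" "c (Inr v) = c (Inr v')"
        using hv unfolding h_def u_def u'_def by auto
      have pres: "\<forall>x\<in>W. c (f x) = c x"
      proof
        fix x assume "x \<in> W"
        show "c (f x) = c x"
          using cu unfolding f_def sw_def by (cases x) auto
      qed
      have "Inr v \<in> W" using vV unfolding W_def fg_vertices_def by auto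
      hence "f (Inr v) = Inr v" using c2 aut pres by blast
      thus False using ne unfolding f_def sw_def by auto
    qed
    moreover have "h ` T \<subseteq> {1..t} \<times> {1..t}"
    proof
      fix p assume "p \<in> h ` T"
      then obtain v where v: "v \<in> T" "p = h v" by auto
      have "Inl (pre v) \<in> W" "Inr v \<in> W"
        using pre[OF v(1)] v TV unfolding W_def fg_vertices_def by auto
      thus "p \<in> {1..t} \<times> {1..t}" using c1 v unfolding h_def by auto
    qed
    ultimately have "card T \<le> card ({1..t} \<times> {1..t})"
      using card_inj_on_le by (metis finite_SigmaI finite_atLeastAtMost)
    thus ?thesis by (simp add: card_cartesian_product)
  qed
  define t where "t = (LEAST t. P t)"
  have Pt: "P t" unfolding t_def using ex LeastI_ex by metis
  have m: "card T \<le> t * t" by (rule main[OF Pt])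
  have t2: "2 \<le> t"
  proof (rule ccontr)
    assume "\<not> 2 \<le> t"
    hence "t * t \<le> 1" by (cases t) auto
    thus False using m assms(4) unfolding T_def by linarith
  qed
  have eq: "2 * (t choose 2) + t = t * t" by (rule ch)
  have "psi (card T) \<le> t" unfolding psi_def
    by (rule Least_le) (use t2 m eq in auto)
  thus ?thesis unfolding T_def t_def W_def E_def dn[unfolded W_def E_def] .
qed

end
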